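(* Let $F(\boldsymbol\theta)=Z(\boldsymbol\theta)+W(\boldsymbol\theta)\mathbf j$ with $Z,W\in L^1(\mathbb T^d;\mathbb C_{\mathbf i}^{s\times s})$, and fix an ordered partition $S_L\dot\cup S_R=\{1,\dots,d\}$. The following are equivalent: (i) $T^{(S_L,S_R)}_{\boldsymbol n}(F)$ is Hermitian for all $\boldsymbol n\in\mathbb N^d$; (ii) $Z(\boldsymbol\theta)$ is Hermitian for a.e. $\boldsymbol\theta\in\mathbb T^d$ and $W(-\boldsymbol\theta)=-W(\boldsymbol\theta)^{\mathsf T}$ for a.e. $\boldsymbol\theta\in\mathbb T^d$. In particular, whether (i) holds does not depend on the choice of the ordered partition.
   Context: $\mathbb H$ is the quaternion algebra with units $\mathbf i,\mathbf j,\mathbf k=\mathbf i\mathbf j$; $\mathbb C_{\mathbf i}=\operatorname{span}_{\mathbb R}\{1,\mathbf i\}\cong\mathbb C$. A quaternion matrix $X$ is Hermitian if $X=X^*$ (quaternion conjugate transpose). $\mathbb T^d=[-\pi,\pi)^d$; $\langle\boldsymbol k,\boldsymbol\theta\rangle_S=\sum_{j\in S}k_j\theta_j$. Sandwich Fourier coefficients: $\widehat F^{(S_L,S_R)}(\boldsymbol k)=(2\pi)^{-d}\int_{\mathbb T^d}e^{-\mathbf i\langle\boldsymbol k,\boldsymbol\theta\rangle_{S_L}}F(\boldsymbol\theta)e^{-\mathbf i\langle\boldsymbol k,\boldsymbol\theta\rangle_{S_R}}d\boldsymbol\theta$; $T^{(S_L,S_R)}_{\boldsymbol n}(F)=[\widehat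 F^{(S_L,S_R)}(\alpha-\beta)]_{\alpha,\beta\in\Lambda_{\boldsymbol n}}$, $\Lambda_{\boldsymbol n}=\prod_\ell\{0,\dots,n_\ell-1\}$ in lexicographic order. *)

theory Defs
  imports "HOL-Analysis.Analysis"
begin

text \<open>Quaternions, represented as z + w j with z, w in C_i (the copy of C spanned by 1, i).
  Multiplication follows from j z = cnj z j and j j = -1.\<close>

datatype quat = Quat (qz: complex) (qw: complex)

definition qmul :: "quat \<Rightarrow> quat \<Rightarrow> quat" where
  "qmul p q = Quat (qz p * qz q - qw p * cnj (qw q)) (qz p * qw q + qw p * cnj (qz q))"

definition qcnj :: "quat \<Rightarrow> quat" where
  "qcnj q = Quat (cnj (qz q)) (- qw q)"

definition qof_complex :: "complex \<Rightarrow> quat" where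
  "qof_complex c = Quat c 0"

definition torus :: "(real^'d) set" where
  "torus = {\<theta>. \<forall>i. - pi \<le> \<theta> $ i \<and> \<theta> $ i < pi}"

definition ipS :: "'d set \<Rightarrow> int^'d \<Rightarrow> real^'d \<Rightarrow> real" where
  "ipS S k \<theta> = (\<Sum>j\<in>S. of_int (k $ j) * \<theta> $ j)"

definition qmatF :: "(real^'d \<Rightarrow> complex^'s^'s) \<Rightarrow> (real^'d \<Rightarrow> complex^'s^'s)
    \<Rightarrow> real^'d \<Rightarrow> 's \<Rightarrow> 's \<Rightarrow> quat" where
  "qmatF Z W \<theta> p q = Quat (Z \<theta> $ p $ q) (W \<theta> $ p $ q)"

text \<open>Sandwich Fourier coefficient (S_L = SL, S_R = complement of SL), integral taken
  componentwise (quaternion = C_i + C_i j).\<close>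
definition sandwich_integrand :: "'d set \<Rightarrow> (real^'d \<Rightarrow> complex^'s^'s) \<Rightarrow> (real^'d \<Rightarrow> complex^'s^'s)
    \<Rightarrow> int^'d \<Rightarrow> 's \<Rightarrow> 's \<Rightarrow> real^'d \<Rightarrow> quat" where
  "sandwich_integrand SL Z W k p q \<theta> =
     qmul (qmul (qof_complex (exp (- \<i> * of_real (ipS SL k \<theta>)))) (qmatF Z W \<theta> p q))
          (qof_complex (exp (- \<i> * of_real (ipS (- SL) k \<theta>))))"

definition sandwich_coeff :: "'d set \<Rightarrow> (real^'d \<Rightarrow> complex^'s^'s) \<Rightarrow> (real^'d \<Rightarrow> complex^'s^'s)
    \<Rightarrow> int^'d \<Rightarrow> 's \<Rightarrow> 's \<Rightarrow> quat" where
  "sandwich_coeff SL Z W k p q =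
     (let c = complex_of_real (1 / (2 * pi) ^ CARD('d)) in
      Quat (c * integral torus (\<lambda>\<theta>. qz (sandwich_integrand SL Z W k p q \<theta>)))
           (c * integral torus (\<lambda>\<theta>. qw (sandwich_integrand SL Z W k p q \<theta>))))"

definition Lambda :: "nat^'d \<Rightarrow> (nat^'d) set" where
  "Lambda n = {\<alpha>. \<forall>l. \<alpha> $ l < n $ l}"

definition idx_diff :: "nat^'d \<Rightarrow> nat^'d \<Rightarrow> int^'d" where
  "idx_diff \<alpha> \<beta> = (\<chi> l. int (\<alpha> $ l) - int (\<beta> $ l))"

text \<open>Multilevel block Toeplitz matrix T_n^{(S_L,S_R)}(F); rows/columns indexed by
  (alpha, p) with alpha in Lambda_n and p an s-index (block (alpha,beta) = coefficient at alpha-beta).\<close>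
definition toeplitzQ :: "'d set \<Rightarrow> (real^'d \<Rightarrow> complex^'s^'s) \<Rightarrow> (real^'d \<Rightarrow> complex^'s^'s)
    \<Rightarrow> ((nat^'d) \<times> 's) \<Rightarrow> ((nat^'d) \<times> 's) \<Rightarrow> quat" where
  "toeplitzQ SL Z W x y = sandwich_coeff SL Z W (idx_diff (fst x) (fst y)) (snd x) (snd y)"

definition qhermitian :: "'i set \<Rightarrow> ('i \<Rightarrow> 'i \<Rightarrow> quat) \<Rightarrow> bool" where
  "qhermitian I M \<longleftrightarrow> (\<forall>x\<in>I. \<forall>y\<in>I. M x y = qcnj (M y x))"

definition all_toeplitz_hermitian :: "'d set \<Rightarrow> (real^'d \<Rightarrow> complex^'s^'s) \<Rightarrow> (real^'d \<Rightarrow> complex^'s^'s) \<Rightarrow> bool" where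
  "all_toeplitz_hermitian SL Z W \<longleftrightarrow>
     (\<forall>n::nat^'d. (\<forall>l. 1 \<le> n $ l) \<longrightarrow> qhermitian (Lambda n \<times> UNIV) (toeplitzQ SL Z W))"

end

theory Submission
  imports Defs
begin

definition Ek :: "int^'d \<Rightarrow> real^'d \<Rightarrow> complex" where
  "Ek k \<theta> = exp (\<i> * of_real (ipS UNIV k \<theta>))"

definition tp :: "(complex \<times> (int^'d)) list \<Rightarrow> real^'d \<Rightarrow> complex" where
  "tp L \<theta> = (\<Sum>(c,k)\<leftarrow>L. c * Ek k \<theta>)"

definition Phi :: "real^'d \<Rightarrow> complex^'d" where
  "Phi \<theta> = (\<chi> j. cis (\<theta> $ j))"

definition Sd :: "(complex^'d) set" where
  "Sd = {y. \<forall>j. norm (y $ j) = 1}"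

definition prodL :: "(complex \<times> (int^'d)) list \<Rightarrow> (complex \<times> (int^'d)) list \<Rightarrow> (complex \<times> (int^'d)) list" where
  "prodL L1 L2 = concat (map (\<lambda>(c,k). map (\<lambda>(d,m). (c*d, k+m)) L2) L1)"

lemma ipS_add: "ipS S (k + m) \<theta> = ipS S k \<theta> + ipS S m \<theta>"
  by (simp add: ipS_def sum.distrib distrib_right)

lemma ipS_uminus: "ipS S (- k) \<theta> = - ipS S k \<theta>"
  by (simp add: ipS_def sum_negf)

lemma ipS_neg_theta: "ipS S k (- \<theta>) = - ipS S k \<theta>"
  by (simp add: ipS_def sum_negf)

lemma Ek_add: "Ek (k + m) \<theta> = Ek k \<theta> * Ek m \<theta>"
  by (simp add: Ek_def ipS_add distrib_left exp_add)

lemma tp_append: "tp (L1 @ L2) \<theta> = tp L1 \<theta> + tp L2 \<theta>"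
  by (simp add: tp_def)

lemma tp_Cons: "tp ((c,k) # L) \<theta> = c * Ek k \<theta> + tp L \<theta>"
  by (simp add: tp_def)

lemma tp_Nil: "tp [] \<theta> = 0"
  by (simp add: tp_def)

lemma tp_prodL: "tp (prodL L1 L2) \<theta> = tp L1 \<theta> * tp L2 \<theta>"
proof (induction L1)
  case Nil
  then show ?case by (simp add: prodL_def tp_def)
next
  case (Cons a L1)
  obtain c k where a: "a = (c,k)" by force
  have "tp (map (\<lambda>(d,m). (c*d, k+m)) L2) \<theta> = c * Ek k \<theta> * tp L2 \<theta>"
    by (induction L2) (auto simp: tp_def Ek_add algebra_simps)
  then show ?case using Cons
    by (simp add: a prodL_def tp_append tp_Cons distrib_right)
qed

lemma compact_Sd: "compact Sd"
proof (rule compact_eq_bounded_closed[THEN iffD2], rule conjI)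
  show "bounded Sd"
    unfolding bounded_iff
  proof (intro exI ballI)
    fix y :: "complex^'d" assume "y \<in> Sd"
    have "norm y \<le> (\<Sum>i\<in>UNIV. norm (y $ i))"
      by (simp add: norm_vec_def L2_set_le_sum)
    also have "\<dots> = real CARD('d)" using \<open>y \<in> Sd\<close> by (simp add: Sd_def)
    finally show "norm y \<le> real CARD('d)" .
  qed
  show "closed Sd" unfolding Sd_def
    by (intro closed_Collect_all closed_Collect_eq continuous_intros)
qed

lemma Phi_in_Sd: "Phi \<theta> \<in> Sd"
  by (simp add: Phi_def Sd_def)

definition Rset :: "((complex^'d) \<Rightarrow> real) set" where
  "Rset = {P. continuous_on Sd P \<and> (\<exists>L. \<forall>\<theta>. complex_of_real (P (Phi \<theta>)) = tp L \<theta>)}"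

definition unitv :: "'d \<Rightarrow> int^'d" where
  "unitv j = (\<chi> l. if l = j then 1 else 0)"

lemma ipS_unitv: "ipS UNIV (unitv j) \<theta> = \<theta> $ j"
proof -
  have "ipS UNIV (unitv j) \<theta> = (\<Sum>l\<in>UNIV. if l = j then \<theta> $ l else 0)"
    unfolding ipS_def by (rule sum.cong) (auto simp: unitv_def)
  then show ?thesis by simp
qed

lemma Ek_unitv: "Ek (unitv j) \<theta> = cis (\<theta> $ j)"
  by (simp add: Ek_def ipS_unitv cis_conv_exp)

lemma Ek_unitv_neg: "Ek (- unitv j) \<theta> = cis (- (\<theta> $ j))"
  by (simp add: Ek_def ipS_uminus ipS_unitv cis_conv_exp)

lemma Re_in_Rset: "(\<lambda>y::complex^'d. Re (y $ j)) \<in> Rset"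
  unfolding Rset_def
proof (intro CollectI conjI exI allI)
  show "continuous_on Sd (\<lambda>y. Re (y $ j))" by (intro continuous_intros)
  fix \<theta> :: "real^'d"
  show "complex_of_real (Re (Phi \<theta> $ j)) = tp [(1/2, unitv j), (1/2, - unitv j)] \<theta>"
    by (simp add: tp_def Ek_unitv Ek_unitv_neg Phi_def complex_eq_iff)
qed

lemma Im_in_Rset: "(\<lambda>y::complex^'d. Im (y $ j)) \<in> Rset"
  unfolding Rset_def
proof (intro CollectI conjI exI allI)
  show "continuous_on Sd (\<lambda>y. Im (y $ j))" by (intro continuous_intros)
  fix \<theta> :: "real^'d"
  show "complex_of_real (Im (Phi \<theta> $ j)) = tp [(- \<i>/2, unitv j), (\<i>/2, - unitv j)] \<theta>"
    by (simp add: tp_def Ek_unitv Ek_unitv_neg Phi_def complex_eq_iff)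
qed

interpretation TR: function_ring_on "Rset :: ((complex^'d) \<Rightarrow> real) set" Sd
proof
  show "compact Sd" by (rule compact_Sd)
next
  fix f :: "complex^'d \<Rightarrow> real" assume "f \<in> Rset" then show "continuous_on Sd f" by (simp add: Rset_def)
next
  fix f g :: "complex^'d \<Rightarrow> real" assume f: "f \<in> Rset" and g: "g \<in> Rset"
  then obtain L1 L2 where L1: "\<forall>\<theta>. complex_of_real (f (Phi \<theta>)) = tp L1 \<theta>"
    and L2: "\<forall>\<theta>. complex_of_real (g (Phi \<theta>)) = tp L2 \<theta>" by (auto simp: Rset_def)
  show "(\<lambda>x. f x + g x) \<in> Rset" using f g L1 L2
    by (auto simp: Rset_def tp_append intro!: continuous_intros exI[of _ "L1 @ L2"])
  show "(\<lambda>x. f x * g x) \<in> Rset" using f g L1 L2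
    by (auto simp: Rset_def tp_prodL intro!: continuous_intros exI[of _ "prodL L1 L2"])
next
  fix c :: real
  show "(\<lambda>_. c) \<in> Rset"
    by (auto simp: Rset_def tp_def Ek_def ipS_def intro!: exI[of _ "[(of_real c, 0)]"])
next
  fix x y :: "complex^'d" assume "x \<in> Sd" "y \<in> Sd" "x \<noteq> y"
  then obtain j where "x $ j \<noteq> y $ j" by (metis vec_eq_iff)
  then have "Re (x $ j) \<noteq> Re (y $ j) \<or> Im (x $ j) \<noteq> Im (y $ j)" by (simp add: complex_eq_iff)
  then show "\<exists>f\<in>Rset. f x \<noteq> f y"
  proof
    assume "Re (x $ j) \<noteq> Re (y $ j)"
    then show ?thesis using Re_in_Rset[of j] by (intro bexI[where x="\<lambda>y. Re (y $ j)"]) auto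
  next
    assume "Im (x $ j) \<noteq> Im (y $ j)"
    then show ?thesis using Im_in_Rset[of j] by (intro bexI[where x="\<lambda>y. Im (y $ j)"]) auto
  qed
qed

lemma SW_trig:
  fixes G :: "complex^'d \<Rightarrow> real"
  assumes "continuous_on Sd G" "e > 0"
  shows "\<exists>L. \<forall>\<theta>. norm (complex_of_real (G (Phi \<theta>)) - tp L \<theta>) < e"
proof -
  obtain P where P: "P \<in> Rset" "\<forall>x\<in>Sd. \<bar>G x - P x\<bar> < e"
    using TR.Stone_Weierstrass_basic[OF assms] by blast
  then obtain L where L: "\<forall>\<theta>. complex_of_real (P (Phi \<theta>)) = tp L \<theta>" by (auto simp: Rset_def)
  show ?thesis
  proof (intro exI allI)
    fix \<theta> :: "real^'d"
    have "norm (complex_of_real (G (Phi \<theta>)) - tp L \<theta>) = \<bar>G (Phi \<theta>) - P (Phi \<theta>)\<bar>"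
      using L by (metis norm_of_real of_real_diff)
    also have "\<dots> < e" using P Phi_in_Sd by blast
    finally show "norm (complex_of_real (G (Phi \<theta>)) - tp L \<theta>) < e" .
  qed
qed


definition FCt :: "(real^'d \<Rightarrow> complex) \<Rightarrow> int^'d \<Rightarrow> complex" where
  "FCt u k = integral torus (\<lambda>\<theta>. exp (- \<i> * of_real (ipS UNIV k \<theta>)) * u \<theta>)"

definition pv :: "real^'d" where "pv = (\<chi> j. pi)"

definition B0 :: "(real^'d) set" where "B0 = box (- pv) pv"

lemma B0_sub_torus: "B0 \<subseteq> torus"
  by (auto simp: B0_def torus_def mem_box_cart pv_def less_imp_le)

lemma torus_sub_cbox: "torus \<subseteq> cbox (- pv) pv"
  by (auto simp: torus_def mem_box_cart pv_def less_imp_le)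

lemma negl_torus_B0: "negligible (torus - B0)"
  by (rule negligible_subset[OF negligible_frontier_interval[of "- pv" pv]])
     (unfold B0_def, rule Diff_mono[OF torus_sub_cbox order_refl])

lemma negl_cbox_torus: "negligible (cbox (- pv) pv - torus)"
  by (rule negligible_subset[OF negligible_frontier_interval[of "- pv" pv]])
     (rule Diff_mono[OF order_refl B0_sub_torus[unfolded B0_def]])

lemma B0_sets[measurable]: "B0 \<in> sets lebesgue"
  by (simp add: B0_def)

lemma cont_meas: "continuous_on UNIV g \<Longrightarrow> g \<in> borel_measurable lebesgue"
  by (metis borel_measurable_continuous_onI measurable_completion measurable_lborel2)

lemma Ek_cont: "continuous_on UNIV (Ek k)"
  unfolding Ek_def ipS_def by (intro continuous_intros)

lemma Ek_norm: "norm (Ek k \<theta>) = 1"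
  by (simp add: Ek_def)

lemma Phi_cont: "continuous_on UNIV Phi"
  unfolding Phi_def by (intro continuous_intros)

lemma bounded_mult_integrable:
  fixes f :: "real^'d \<Rightarrow> complex"
  assumes "integrable lebesgue f" "g \<in> borel_measurable lebesgue" "\<And>x. norm (g x) \<le> B"
  shows "integrable lebesgue (\<lambda>x. g x * f x)"
proof (rule Bochner_Integration.integrable_bound[where f="\<lambda>x. of_real B * f x"])
  show "integrable lebesgue (\<lambda>x. complex_of_real B * f x)" using assms(1) by simp
  show "(\<lambda>x. g x * f x) \<in> borel_measurable lebesgue"
    using assms(1,2) by (intro borel_measurable_times) (auto dest: borel_measurable_integrable)
  have "0 \<le> B" using assms(3) norm_ge_zero order_trans by blast
  then show "AE x in lebesgue. norm (g x * f x) \<le> norm (of_real B * f x)"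
    using assms(3) by (auto simp: norm_mult intro!: mult_right_mono)
qed

lemma henstock_to_bochner:
  fixes u :: "real^'d \<Rightarrow> complex"
  assumes u: "u absolutely_integrable_on B0" and g: "continuous_on UNIV g" "\<And>x. norm (g x) \<le> B"
  shows "integral B0 (\<lambda>\<theta>. g \<theta> * u \<theta>) = (LINT \<theta>|lebesgue. g \<theta> * (indicator B0 \<theta> *\<^sub>R u \<theta>))"
proof -
  have fi: "integrable lebesgue (\<lambda>\<theta>. indicator B0 \<theta> *\<^sub>R u \<theta>)" using u by (simp add: set_integrable_def)
  have eq: "(\<lambda>\<theta>. indicator B0 \<theta> *\<^sub>R (g \<theta> * u \<theta>)) = (\<lambda>\<theta>. g \<theta> * (indicator B0 \<theta> *\<^sub>R u \<theta>))"
    by (auto simp: indicator_def)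
  have "set_integrable lebesgue B0 (\<lambda>\<theta>. g \<theta> * u \<theta>)"
    unfolding set_integrable_def eq
    by (rule bounded_mult_integrable[OF fi cont_meas[OF g(1)] g(2)])
  then have "(LINT \<theta>:B0|lebesgue. g \<theta> * u \<theta>) = integral B0 (\<lambda>\<theta>. g \<theta> * u \<theta>)"
    by (rule set_lebesgue_integral_eq_integral(2))
  then show ?thesis unfolding set_lebesgue_integral_def eq by (rule sym)
qed


locale fu =
  fixes u :: "real^'d::finite \<Rightarrow> complex"
  assumes u: "u absolutely_integrable_on B0"
  and z: "\<And>k. integral B0 (\<lambda>\<theta>. Ek k \<theta> * u \<theta>) = 0"
begin

definition fB where "fB = (\<lambda>\<theta>. indicator B0 \<theta> *\<^sub>R u \<theta>)"

lemma fB_int: "integrable lebesgue fB"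
  using u by (simp add: set_integrable_def fB_def)

lemma Ek_int: "integrable lebesgue (\<lambda>\<theta>. Ek k \<theta> * fB \<theta>)"
  by (rule bounded_mult_integrable[OF fB_int cont_meas[OF Ek_cont], where B=1]) (simp add: Ek_norm)

lemma Ek_zero: "(LINT \<theta>|lebesgue. Ek k \<theta> * fB \<theta>) = 0"
  using henstock_to_bochner[OF u Ek_cont, where B=1] z[of k] by (simp add: Ek_norm fB_def)

lemma tp_zero: "integrable lebesgue (\<lambda>\<theta>. tp L \<theta> * fB \<theta>) \<and> (LINT \<theta>|lebesgue. tp L \<theta> * fB \<theta>) = 0"
proof (induction L)
  case Nil
  then show ?case by (simp add: tp_Nil)
next
  case (Cons a L)
  obtain c k where a: "a = (c,k)" by force
  have eq: "(\<lambda>\<theta>. tp (a # L) \<theta> * fB \<theta>) = (\<lambda>\<theta>. c * (Ek k \<theta> * fB \<theta>) + tp L \<theta> * fB \<theta>)"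
    by (simp add: a tp_Cons algebra_simps)
  have i1: "integrable lebesgue (\<lambda>\<theta>. c * (Ek k \<theta> * fB \<theta>))" using Ek_int by simp
  show ?case unfolding eq
    using Cons.IH i1 Ek_zero[of k] by (simp add: Bochner_Integration.integral_add)
qed

end


context fu
begin
lemma cont_zero:
  fixes G :: "complex^'d \<Rightarrow> real"
  assumes G: "continuous_on Sd G"
  shows "integrable lebesgue (\<lambda>\<theta>. of_real (G (Phi \<theta>)) * fB \<theta>) \<and>
         (LINT \<theta>|lebesgue. of_real (G (Phi \<theta>)) * fB \<theta>) = 0"
proof -
  have GP: "continuous_on UNIV (\<lambda>\<theta>. complex_of_real (G (Phi \<theta>)))"
    by (intro continuous_intros continuous_on_compose2[OF G Phi_cont]) (auto simp: Phi_in_Sd)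
  have cG: "compact (G ` Sd)" by (rule compact_continuous_image[OF G compact_Sd])
  obtain B where B: "B > 0" "\<And>x. x \<in> G ` Sd \<Longrightarrow> norm x \<le> B"
    using compact_imp_bounded[OF cG] unfolding bounded_pos by blast
  have Bb: "norm (complex_of_real (G (Phi \<theta>))) \<le> B" for \<theta>
    using B(2)[of "G (Phi \<theta>)"] Phi_in_Sd by auto
  have int: "integrable lebesgue (\<lambda>\<theta>. of_real (G (Phi \<theta>)) * fB \<theta>)"
    by (rule bounded_mult_integrable[OF fB_int cont_meas[OF GP] Bb])
  define N where "N = (LINT \<theta>|lebesgue. norm (fB \<theta>))"
  have N0: "N \<ge> 0" unfolding N_def by simp
  have le: "norm (LINT \<theta>|lebesgue. of_real (G (Phi \<theta>)) * fB \<theta>) \<le> e * N" if e: "e > 0" for e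
  proof -
    obtain L where L: "\<And>\<theta>. norm (complex_of_real (G (Phi \<theta>)) - tp L \<theta>) < e"
      using SW_trig[OF G e] by blast
    have tL: "integrable lebesgue (\<lambda>\<theta>. tp L \<theta> * fB \<theta>)" "(LINT \<theta>|lebesgue. tp L \<theta> * fB \<theta>) = 0"
      using tp_zero[of L] by auto
    have dint: "integrable lebesgue (\<lambda>\<theta>. (of_real (G (Phi \<theta>)) - tp L \<theta>) * fB \<theta>)"
      using Bochner_Integration.integrable_diff[OF int tL(1)] by (simp add: algebra_simps)
    have "(LINT \<theta>|lebesgue. of_real (G (Phi \<theta>)) * fB \<theta>)
        = (LINT \<theta>|lebesgue. (of_real (G (Phi \<theta>)) - tp L \<theta>) * fB \<theta>) + (LINT \<theta>|lebesgue. tp L \<theta> * fB \<theta>)"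
      by (subst Bochner_Integration.integral_add[OF dint tL(1), symmetric]) (simp add: algebra_simps)
    also have "\<dots> = (LINT \<theta>|lebesgue. (of_real (G (Phi \<theta>)) - tp L \<theta>) * fB \<theta>)"
      using tL(2) by simp
    finally have eq: "(LINT \<theta>|lebesgue. of_real (G (Phi \<theta>)) * fB \<theta>) = (LINT \<theta>|lebesgue. (of_real (G (Phi \<theta>)) - tp L \<theta>) * fB \<theta>)" .
    have "norm (LINT \<theta>|lebesgue. of_real (G (Phi \<theta>)) * fB \<theta>)
       \<le> (LINT \<theta>|lebesgue. norm ((of_real (G (Phi \<theta>)) - tp L \<theta>) * fB \<theta>))"
      unfolding eq by (rule integral_norm_bound)
    also have "\<dots> \<le> (LINT \<theta>|lebesgue. e * norm (fB \<theta>))"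
    proof (rule integral_mono)
      show "integrable lebesgue (\<lambda>\<theta>. norm ((of_real (G (Phi \<theta>)) - tp L \<theta>) * fB \<theta>))"
        using dint by simp
      show "integrable lebesgue (\<lambda>\<theta>. e * norm (fB \<theta>))" using fB_int by simp
      fix \<theta>
      show "norm ((of_real (G (Phi \<theta>)) - tp L \<theta>) * fB \<theta>) \<le> e * norm (fB \<theta>)"
        unfolding norm_mult using L[of \<theta>] by (intro mult_right_mono) auto
    qed
    also have "\<dots> = e * N" unfolding N_def by simp
    finally show ?thesis .
  qed
  have "norm (LINT \<theta>|lebesgue. of_real (G (Phi \<theta>)) * fB \<theta>) \<le> 0"
  proof (rule field_le_epsilon)
    fix e :: real assume e: "e > 0"
    have "norm (LINT \<theta>|lebesgue. of_real (G (Phi \<theta>)) * fB \<theta>) \<le> (e / (N + 1)) * N"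
      using le[of "e / (N+1)"] e N0 by simp
    also have "\<dots> \<le> e" using e N0 by (simp add: field_simps)
    finally show "norm (LINT \<theta>|lebesgue. of_real (G (Phi \<theta>)) * fB \<theta>) \<le> 0 + e" by simp
  qed
  then show ?thesis using int by simp
qed

end

lemma cis_arc:
  fixes t a b :: real
  assumes t: "-pi < t" "t < pi" and ab: "-pi \<le> a" "a < b" "b \<le> pi"
  shows "cis t \<in> cis ` {b..a+2*pi} \<longleftrightarrow> \<not> (a < t \<and> t < b)"
proof
  assume "cis t \<in> cis ` {b..a+2*pi}"
  then obtain s where s: "s \<in> {b..a+2*pi}" "cis t = cis s" by blast
  then obtain n :: int where n: "\<i> * complex_of_real t = \<i> * complex_of_real s + (of_int (2 * n) * pi) * \<i>"
    by (auto simp: cis_conv_exp exp_eq)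
  then have "\<i> * complex_of_real t = \<i> * complex_of_real (s + 2 * real_of_int n * pi)"
    by (simp add: algebra_simps)
  then have "t = s + 2 * real_of_int n * pi"
    by (simp only: mult_cancel_left of_real_eq_iff) simp
  show "\<not> (a < t \<and> t < b)"
  proof
    assume h: "a < t \<and> t < b"
    have "pi * (-1) < pi * real_of_int n" using \<open>t = s + 2 * real_of_int n * pi\<close> s(1) h
      by (simp add: algebra_simps)
    then have "-1 < real_of_int n" using mult_less_cancel_left_pos[OF pi_gt_zero] by blast
    moreover have "pi * real_of_int n < pi * 0" using \<open>t = s + 2 * real_of_int n * pi\<close> s(1) h
      by (simp add: algebra_simps)
    then have "real_of_int n < 0" using mult_less_cancel_left_pos[OF pi_gt_zero] by blast
    ultimately have "-1 < n" "n < 0" by linarith+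
    then show False by linarith
  qed
next
  assume h: "\<not> (a < t \<and> t < b)"
  show "cis t \<in> cis ` {b..a+2*pi}"
  proof (cases "t \<le> a")
    case True
    have "cis t = cis (t + 2*pi)" by (simp add: complex_eq_iff)
    moreover have "t + 2*pi \<in> {b..a+2*pi}" using True t ab by auto
    ultimately show ?thesis by blast
  next
    case False
    then have "t \<in> {b..a+2*pi}" using h t ab by auto
    then show ?thesis by blast
  qed
qed

context fu
begin

lemma box_zero: "(LINT \<theta>|lebesgue. indicator (box a b) \<theta> *\<^sub>R fB \<theta>) = 0"
proof -
  define a' where "a' = (\<chi> j. max (a$j) (-pi))"
  define b' where "b' = (\<chi> j. min (b$j) pi)"
  have memB0: "\<theta> \<in> B0 \<longleftrightarrow> (\<forall>j. -pi < \<theta>$j \<and> \<theta>$j < pi)" for \<theta> :: "real^'d"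
    by (simp add: B0_def mem_box_cart pv_def)
  have mem: "\<theta> \<in> box a b \<longleftrightarrow> (\<forall>j. a'$j < \<theta>$j \<and> \<theta>$j < b'$j)" if "\<theta> \<in> B0" for \<theta>
    using that unfolding memB0 by (auto simp: mem_box_cart a'_def b'_def)
  have fB0: "\<theta> \<notin> B0 \<Longrightarrow> fB \<theta> = 0" for \<theta> by (simp add: fB_def)
  show ?thesis
  proof (cases "\<exists>j. b'$j \<le> a'$j")
    case True
    have "indicator (box a b) \<theta> *\<^sub>R fB \<theta> = 0" for \<theta>
    proof (cases "\<theta> \<in> B0")
      case True
      obtain j where j: "b'$j \<le> a'$j" using \<open>\<exists>j. b'$j \<le> a'$j\<close> by blast
      have "\<theta> \<notin> box a b"
      proof
        assume "\<theta> \<in> box a b"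
        then have "a'$j < \<theta>$j \<and> \<theta>$j < b'$j" using mem[OF True] by blast
        then show False using j by linarith
      qed
      then show ?thesis by simp
    qed (simp add: fB0)
    then have "(\<lambda>\<theta>. indicator (box a b) \<theta> *\<^sub>R fB \<theta>) = (\<lambda>\<theta>. 0)" by (rule ext)
    then show ?thesis by simp
  next
    case False
    then have ab': "a'$j < b'$j" for j by (simp add: not_le)
    have ab'2: "-pi \<le> a'$j" "b'$j \<le> pi" for j by (auto simp: a'_def b'_def)
    define Cj where "Cj j = cis ` {b'$j .. a'$j + 2*pi}" for j
    define C where "C = (\<Union>j. (\<lambda>y::complex^'d. y$j) -` Cj j)"
    have "compact (Cj j)" for j unfolding Cj_def
      by (intro compact_continuous_image continuous_intros) simp
    then have "closed C" unfolding C_def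
      by (intro closed_UN finite closed_vimage_vec_nth ballI compact_imp_closed) auto
    have bm: "b'$j \<in> {b'$j .. a'$j + 2*pi}" for j using ab'2[of j] by auto
    have "(\<chi> j. cis (b'$j)) \<in> C"
      unfolding C_def Cj_def using imageI[OF bm[of undefined], of cis] by auto
    then have Cne: "C \<noteq> {}" by blast
    have PhiC: "Phi \<theta> \<in> C \<longleftrightarrow> \<theta> \<notin> box a b" if "\<theta> \<in> B0" for \<theta>
    proof -
      have "Phi \<theta> \<in> C \<longleftrightarrow> (\<exists>j. cis (\<theta>$j) \<in> Cj j)" by (simp add: C_def Phi_def)
      also have "\<dots> \<longleftrightarrow> (\<exists>j. \<not> (a'$j < \<theta>$j \<and> \<theta>$j < b'$j))"
        unfolding Cj_def using cis_arc ab' ab'2 that memB0 by blast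
      finally show ?thesis using mem[OF that] by blast
    qed
    define Gn where "Gn n y = min 1 (real n * infdist y C)" for n :: nat and y
    define s where "s n \<theta> = complex_of_real (Gn n (Phi \<theta>)) * fB \<theta>" for n \<theta>
    have Gcont: "continuous_on Sd (Gn n)" for n
      unfolding Gn_def by (intro continuous_intros)
    have s0: "integrable lebesgue (s n) \<and> integral\<^sup>L lebesgue (s n) = 0" for n
      unfolding s_def using cont_zero[OF Gcont] by blast
    have Gb: "0 \<le> Gn n y \<and> Gn n y \<le> 1" for n y
      by (auto simp: Gn_def infdist_nonneg)
    have lim: "(\<lambda>n. s n \<theta>) \<longlonglongrightarrow> indicator (box a b) \<theta> *\<^sub>R fB \<theta>" for \<theta>
    proof (cases "\<theta> \<in> B0")
      case False
      then show ?thesis by (simp add: s_def fB0)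
    next
      case B: True
      show ?thesis
      proof (cases "\<theta> \<in> box a b")
        case True
        then have "Phi \<theta> \<notin> C" using PhiC[OF B] by blast
        then have d: "infdist (Phi \<theta>) C > 0" using infdist_pos_not_in_closed[OF \<open>closed C\<close> Cne] by blast
        obtain N :: nat where N: "1 / infdist (Phi \<theta>) C < real N" using reals_Archimedean2 by blast
        have "\<forall>n\<ge>N. s n \<theta> = indicator (box a b) \<theta> *\<^sub>R fB \<theta>"
        proof (intro allI impI)
          fix n assume "N \<le> n"
          then have "1 / infdist (Phi \<theta>) C < real n" using N by linarith
          then have "1 \<le> real n * infdist (Phi \<theta>) C" using d by (simp add: field_simps)
          then show "s n \<theta> = indicator (box a b) \<theta> *\<^sub>R fB \<theta>"
            using True by (simp add: s_def Gn_def)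
        qed
        then show ?thesis by (intro tendsto_eventually) (auto simp: eventually_sequentially)
      next
        case False
        then have "Phi \<theta> \<in> C" using PhiC[OF B] by blast
        then show ?thesis using False by (simp add: s_def Gn_def)
      qed
    qed
    have "(\<lambda>n. integral\<^sup>L lebesgue (s n)) \<longlonglongrightarrow> (LINT \<theta>|lebesgue. indicator (box a b) \<theta> *\<^sub>R fB \<theta>)"
    proof (rule integral_dominated_convergence[where w="\<lambda>\<theta>. norm (fB \<theta>)"])
      show "(\<lambda>\<theta>. indicator (box a b) \<theta> *\<^sub>R fB \<theta>) \<in> borel_measurable lebesgue"
        using fB_int by (intro borel_measurable_integrable integrable_mult_indicator) auto
      show "s n \<in> borel_measurable lebesgue" for n using s0[of n] by (simp add: borel_measurable_integrable)
      show "integrable lebesgue (\<lambda>\<theta>. norm (fB \<theta>))" using fB_int by simp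
      show "AE \<theta> in lebesgue. (\<lambda>n. s n \<theta>) \<longlonglongrightarrow> indicator (box a b) \<theta> *\<^sub>R fB \<theta>" using lim by simp
      show "AE \<theta> in lebesgue. norm (s n \<theta>) \<le> norm (fB \<theta>)" for n
        using Gb by (auto simp: s_def norm_mult intro!: mult_left_le_one_le)
    qed
    moreover have "(\<lambda>n. integral\<^sup>L lebesgue (s n)) = (\<lambda>n. 0)" using s0 by simp
    ultimately show ?thesis using LIMSEQ_unique tendsto_const by metis
  qed
qed

end


lemma sf_leb: "sigma_finite_measure (lebesgue :: 'a::euclidean_space measure)"
  unfolding sigma_finite_measure_def
  apply (rule exI[of _ "range (\<lambda>n::nat. cball (0::'a) (real n))"], intro conjI)
  apply simp
  using lmeasurable_cball apply (auto dest: fmeasurableD)[1]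
proof -
  let ?A = "range (\<lambda>n::nat. cball (0::'a) (real n))"
  have "x \<in> cball 0 (real (nat \<lceil>norm x\<rceil>))" for x :: 'a
    by (simp add: real_nat_ceiling_ge)
  then show "\<Union> ?A = space lebesgue" by (auto intro: real_arch_simple)
  show "\<forall>a\<in>?A. emeasure lebesgue a \<noteq> \<infinity>"
  proof
    fix a assume "a \<in> ?A"
    then obtain n :: nat where a: "a = cball 0 (real n)" by blast
    have "cball (0::'a) (real n) \<in> lmeasurable" by (rule lmeasurable_cball)
    then show "emeasure lebesgue a \<noteq> \<infinity>" unfolding a fmeasurable_def by auto
  qed
qed

lemma borel_leb: "A \<in> sets borel \<Longrightarrow> A \<in> sets lebesgue"
  by (metis sets_completionI_sets sets_lborel)

context fu
begin

lemma fB_total: "(LINT \<theta>|lebesgue. fB \<theta>) = 0"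
proof -
  have "(\<lambda>\<theta>. indicator (box (-pv) pv) \<theta> *\<^sub>R fB \<theta>) = fB"
    by (auto simp: fB_def B0_def indicator_def)
  then show ?thesis using box_zero[of "-pv" pv] by simp
qed

lemma borel_zero:
  assumes A: "A \<in> sets borel"
  shows "set_lebesgue_integral lebesgue A fB = 0"
proof -
  let ?G = "range (\<lambda>(a, b). box a b :: (real^'d) set)"
  have "Int_stable ?G" by (auto simp: Int_stable_def box_Int_box)
  moreover have "?G \<subseteq> Pow UNIV" by auto
  moreover have "A \<in> sigma_sets UNIV ?G" using A unfolding borel_eq_box by simp
  ultimately show ?thesis
  proof (induction rule: sigma_sets_induct_disjoint)
    case (basic A)
    then obtain a b where "A = box a b" by auto
    then show ?case using box_zero[of a b] by (simp add: set_lebesgue_integral_def)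
  next
    case empty
    then show ?case by (simp add: set_lebesgue_integral_def)
  next
    case (compl A)
    then have "A \<in> sets borel" by (simp add: borel_eq_box)
    then have Al: "A \<in> sets lebesgue" by (rule borel_leb)
    have eq: "(\<lambda>x. indicator (UNIV - A) x *\<^sub>R fB x) = (\<lambda>x. fB x - indicator A x *\<^sub>R fB x)"
      by (auto simp: indicator_def)
    have "integrable lebesgue (\<lambda>x. indicator A x *\<^sub>R fB x)"
      by (rule integrable_mult_indicator[OF Al fB_int])
    then show ?case using compl.IH fB_total fB_int
      unfolding set_lebesgue_integral_def eq by (simp add: Bochner_Integration.integral_diff)
  next
    case (union F)
    then have Fl: "F i \<in> sets lebesgue" for i by (simp add: borel_eq_box borel_leb subset_eq)
    have "(\<Union>i. F i) \<in> sets lebesgue" using Fl by blast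
    then have si: "set_integrable lebesgue (\<Union>i. F i) fB"
      unfolding set_integrable_def by (rule integrable_mult_indicator[OF _ fB_int])
    have "(LINT x:(\<Union>i. F i)|lebesgue. fB x) = (\<Sum>i. (LINT x:(F i)|lebesgue. fB x))"
      by (rule lebesgue_integral_countable_add[OF Fl _ si])
         (use union.hyps(1) in \<open>auto simp: disjoint_family_on_def\<close>)
    then show ?case using union.IH by simp
  qed
qed

lemma leb_zero:
  assumes A: "A \<in> sets lebesgue"
  shows "set_lebesgue_integral lebesgue A fB = 0"
proof -
  obtain B N where BN: "B \<in> sets borel" "negligible N" "B \<union> N = A"
    using sets_lebesgue_almost_borel[OF A] by metis
  have Bl: "B \<in> sets lebesgue" by (rule borel_leb[OF BN(1)])
  have "(LINT x:A|lebesgue. fB x) = (LINT x:B|lebesgue. fB x)"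
  proof (rule set_integral_cong_set)
    show "set_borel_measurable lebesgue B fB" "set_borel_measurable lebesgue A fB"
      unfolding set_borel_measurable_def
      using integrable_mult_indicator[OF Bl fB_int] integrable_mult_indicator[OF A fB_int]
      by (auto intro: borel_measurable_integrable)
    have "AE x in lebesgue. x \<notin> N" using BN(2) by (simp add: AE_not_in negligible_iff_null_sets)
    then show "AE x in lebesgue. (x \<in> B) = (x \<in> A)" using BN(3) by auto
  qed
  then show ?thesis using borel_zero[OF BN(1)] by simp
qed

lemma fB_ae: "AE x in lebesgue. fB x = 0"
  by (rule sigma_finite_measure.density_zero[OF sf_leb fB_int leb_zero])

end

lemma fourier_unique:
  fixes u :: "real^'d \<Rightarrow> complex"
  assumes u: "u absolutely_integrable_on torus" and z: "\<And>k. FCt u k = 0"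
  shows "AE \<theta> in lebesgue. \<theta> \<in> torus \<longrightarrow> u \<theta> = 0"
proof -
  have uB: "u absolutely_integrable_on B0"
    by (rule set_integrable_subset[OF u B0_sets B0_sub_torus])
  have zB: "integral B0 (\<lambda>\<theta>. Ek k \<theta> * u \<theta>) = 0" for k
  proof -
    have "integral B0 (\<lambda>\<theta>. Ek k \<theta> * u \<theta>) = integral torus (\<lambda>\<theta>. Ek k \<theta> * u \<theta>)"
      by (rule integral_subset_negligible[OF B0_sub_torus negl_torus_B0])
    also have "\<dots> = FCt u (-k)"
      unfolding FCt_def Ek_def ipS_uminus by simp
    finally show ?thesis using z by simp
  qed
  interpret fu u by unfold_locales (rule uB, rule zB)
  have "AE x in lebesgue. x \<notin> torus - B0"
    by (rule AE_not_in) (use negl_torus_B0 in \<open>simp add: negligible_iff_null_sets\<close>)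
  then show ?thesis using fB_ae
    by eventually_elim (auto simp: fB_def)
qed


lemma fourier_zero_of_ae:
  fixes u :: "real^'d \<Rightarrow> complex"
  assumes "AE \<theta> in lebesgue. \<theta> \<in> torus \<longrightarrow> u \<theta> = 0"
  shows "FCt u k = 0"
proof -
  obtain N where N: "negligible N" "{x. \<not> (x \<in> torus \<longrightarrow> u x = 0)} \<subseteq> N"
    using assms eventually_ae_filter_negligible by metis
  have "FCt u k = integral torus (\<lambda>\<theta>::real^'d. 0::complex)"
    unfolding FCt_def by (rule integral_spike[OF N(1)]) (use N(2) in auto)
  then show ?thesis by simp
qed

definition sig :: "'d set \<Rightarrow> int^'d \<Rightarrow> int^'d" where
  "sig SL k = (\<chi> j. if j \<in> SL then k $ j else - (k $ j))"

lemma sig_sig: "sig SL (sig SL k) = k"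
  by (simp add: sig_def vec_eq_iff)

lemma sig_uminus: "sig SL (- k) = - sig SL k"
  by (simp add: sig_def vec_eq_iff)

lemma ipS_split: "ipS SL k \<theta> + ipS (- SL) k \<theta> = ipS UNIV k \<theta>"
proof -
  have "ipS UNIV k \<theta> = ipS (UNIV \<inter> SL) k \<theta> + ipS (UNIV - SL) k \<theta>"
    unfolding ipS_def by (rule sum.Int_Diff) simp
  then show ?thesis by (simp add: Compl_eq_Diff_UNIV)
qed

lemma ipS_sig: "ipS SL k \<theta> - ipS (- SL) k \<theta> = ipS UNIV (sig SL k) \<theta>"
proof -
  have "ipS UNIV (sig SL k) \<theta> = ipS (UNIV \<inter> SL) (sig SL k) \<theta> + ipS (UNIV - SL) (sig SL k) \<theta>"
    unfolding ipS_def by (rule sum.Int_Diff) simp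
  also have "ipS (UNIV \<inter> SL) (sig SL k) \<theta> = ipS SL k \<theta>"
    unfolding ipS_def by (rule sum.cong) (auto simp: sig_def)
  also have "ipS (UNIV - SL) (sig SL k) \<theta> = - ipS (- SL) k \<theta>"
    unfolding ipS_def by (subst sum_negf[symmetric], rule sum.cong) (auto simp: sig_def Compl_eq_Diff_UNIV)
  finally show ?thesis by simp
qed

lemma qz_si: "qz (sandwich_integrand SL Z W k p q \<theta>) = exp (- \<i> * of_real (ipS UNIV k \<theta>)) * (Z \<theta> $ p $ q)"
proof -
  have "exp (- \<i> * of_real (ipS SL k \<theta>)) * exp (- \<i> * of_real (ipS (- SL) k \<theta>))
      = exp (- \<i> * of_real (ipS UNIV k \<theta>))"
  proof -
    have e: "- \<i> * of_real (ipS UNIV k \<theta>) = - \<i> * of_real (ipS SL k \<theta>) + - \<i> * of_real (ipS (- SL) k \<theta>)"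
    proof -
      have "complex_of_real (ipS UNIV k \<theta>) = of_real (ipS SL k \<theta>) + of_real (ipS (- SL) k \<theta>)"
        using ipS_split[of SL k \<theta>] by (metis of_real_add)
      then show ?thesis by (simp add: algebra_simps)
    qed
    show ?thesis unfolding e exp_add ..
  qed
  then show ?thesis
    by (simp add: sandwich_integrand_def qmul_def qof_complex_def qmatF_def algebra_simps)
qed

lemma qw_si: "qw (sandwich_integrand SL Z W k p q \<theta>) = exp (- \<i> * of_real (ipS UNIV (sig SL k) \<theta>)) * (W \<theta> $ p $ q)"
proof -
  have "exp (- \<i> * of_real (ipS SL k \<theta>)) * cnj (exp (- \<i> * of_real (ipS (- SL) k \<theta>)))
      = exp (- \<i> * of_real (ipS UNIV (sig SL k) \<theta>))"
  proof -
    have e: "- \<i> * of_real (ipS UNIV (sig SL k) \<theta>) = - \<i> * of_real (ipS SL k \<theta>) + \<i> * of_real (ipS (- SL) k \<theta>)"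
    proof -
      have h: "complex_of_real (ipS UNIV (sig SL k) \<theta>) = of_real (ipS SL k \<theta>) - of_real (ipS (- SL) k \<theta>)"
        using ipS_sig[of SL k \<theta>] by (metis of_real_diff)
      show ?thesis unfolding h by (simp add: algebra_simps)
    qed
    show ?thesis unfolding e exp_add by (simp add: exp_cnj)
  qed
  then show ?thesis
    by (simp add: sandwich_integrand_def qmul_def qof_complex_def qmatF_def algebra_simps)
qed

definition cc :: "'d itself \<Rightarrow> complex" where
  "cc (_::'d itself) = complex_of_real (1 / (2 * pi) ^ CARD('d))"

lemma sc_eq: "sandwich_coeff SL Z W k p q =
   Quat (cc TYPE('d) * FCt (\<lambda>\<theta>. Z \<theta> $ p $ q) k) (cc TYPE('d) * FCt (\<lambda>\<theta>. W \<theta> $ p $ q) (sig SL k))"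
  for Z W :: "real^'d \<Rightarrow> complex^'s^'s"
  by (simp add: sandwich_coeff_def Let_def FCt_def qz_si qw_si cc_def)

lemma cc_nz: "cc TYPE('d) \<noteq> 0" and cc_cnj: "cnj (cc TYPE('d)) = cc TYPE('d)"
  by (simp_all add: cc_def)

lemma FCt_cnj: "cnj (FCt v (- k)) = FCt (\<lambda>\<theta>. cnj (v \<theta>)) k"
  unfolding FCt_def integral_cnj by (simp add: exp_cnj ipS_uminus)

lemma FCt_reflect: "FCt v (- m) = FCt (\<lambda>\<theta>. v (- \<theta>)) m"
proof -
  have tc: "integral torus F = integral (cbox (- pv) pv) F" for F :: "real^'d \<Rightarrow> complex"
    by (rule integral_subset_negligible[OF torus_sub_cbox negl_cbox_torus])
  define F where "F \<theta> = exp (- \<i> * of_real (ipS UNIV m \<theta>)) * v (- \<theta>)" for \<theta>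
  have "FCt v (- m) = integral (cbox (- pv) pv) (\<lambda>\<theta>. F (- \<theta>))"
    unfolding FCt_def tc F_def by (simp add: ipS_uminus ipS_neg_theta)
  also have "\<dots> = integral (cbox (- pv) pv) F"
    using integral_reflect[where a="- pv" and b=pv and f=F] by simp
  also have "\<dots> = FCt (\<lambda>\<theta>. v (- \<theta>)) m"
    unfolding FCt_def tc F_def ..
  finally show ?thesis .
qed

lemma FC_integrable:
  fixes v :: "real^'d \<Rightarrow> complex"
  assumes v: "v absolutely_integrable_on torus"
  shows "(\<lambda>\<theta>. exp (- \<i> * of_real (ipS UNIV k \<theta>)) * v \<theta>) integrable_on torus"
proof -
  have g: "continuous_on UNIV (\<lambda>\<theta>::real^'d. exp (- \<i> * of_real (ipS UNIV k \<theta>)))"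
    unfolding ipS_def by (intro continuous_intros)
  have eq: "(\<lambda>\<theta>. indicator torus \<theta> *\<^sub>R (exp (- \<i> * of_real (ipS UNIV k \<theta>)) * v \<theta>))
      = (\<lambda>\<theta>. exp (- \<i> * of_real (ipS UNIV k \<theta>)) * (indicator torus \<theta> *\<^sub>R v \<theta>))"
    by (auto simp: indicator_def)
  have "set_integrable lebesgue torus (\<lambda>\<theta>. exp (- \<i> * of_real (ipS UNIV k \<theta>)) * v \<theta>)"
    unfolding set_integrable_def eq
    by (rule bounded_mult_integrable[OF _ cont_meas[OF g], where B=1])
       (use v in \<open>simp_all add: set_integrable_def\<close>)
  then show ?thesis by (rule set_lebesgue_integral_eq_integral(1))
qed

lemma FCt_add:
  assumes "v absolutely_integrable_on torus" "w absolutely_integrable_on torus"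
  shows "FCt (\<lambda>\<theta>. v \<theta> + w \<theta>) k = FCt v k + FCt w k"
  unfolding FCt_def using integral_add[OF FC_integrable[OF assms(1)] FC_integrable[OF assms(2)]]
  by (simp add: distrib_left)

lemma FCt_diff:
  assumes "v absolutely_integrable_on torus" "w absolutely_integrable_on torus"
  shows "FCt (\<lambda>\<theta>. v \<theta> - w \<theta>) k = FCt v k - FCt w k"
  unfolding FCt_def using integral_diff[OF FC_integrable[OF assms(1)] FC_integrable[OF assms(2)]]
  by (simp add: right_diff_distrib)

lemma absint_cnj:
  fixes v :: "real^'d \<Rightarrow> complex"
  assumes "v absolutely_integrable_on torus"
  shows "(\<lambda>\<theta>. cnj (v \<theta>)) absolutely_integrable_on torus"
proof -
  have eq: "(\<lambda>\<theta>. indicator torus \<theta> *\<^sub>R cnj (v \<theta>)) = (\<lambda>\<theta>. cnj (indicator torus \<theta> *\<^sub>R v \<theta>))"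
    by (auto simp: indicator_def)
  show ?thesis using assms unfolding set_integrable_def eq complex_integrable_cnj .
qed

lemma absint_reflect:
  fixes v :: "real^'d \<Rightarrow> complex"
  assumes v: "v absolutely_integrable_on torus"
  shows "(\<lambda>\<theta>. v (- \<theta>)) absolutely_integrable_on torus"
proof -
  have "v absolutely_integrable_on cbox (- pv) pv"
    by (rule absolutely_integrable_spike_set[OF v])
       (auto intro: negligible_subset[OF negl_cbox_torus] simp: torus_sub_cbox[THEN subsetD])
  then have "(\<lambda>\<theta>. v (- \<theta>)) absolutely_integrable_on cbox (- pv) (- (- pv))"
    using absolutely_integrable_reflect[where f=v and a="- pv" and b=pv] by simp
  then have r: "(\<lambda>\<theta>. v (- \<theta>)) absolutely_integrable_on cbox (- pv) pv" by simp
  show ?thesis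
    by (rule absolutely_integrable_spike_set[OF r])
       (auto intro: negligible_subset[OF negl_cbox_torus] simp: torus_sub_cbox[THEN subsetD])
qed


lemma herm_iff:
  "all_toeplitz_hermitian SL Z W \<longleftrightarrow>
   (\<forall>k p q. sandwich_coeff SL Z W k p q = qcnj (sandwich_coeff SL Z W (- k) q p))"
proof
  assume H: "all_toeplitz_hermitian SL Z W"
  show "\<forall>k p q. sandwich_coeff SL Z W k p q = qcnj (sandwich_coeff SL Z W (- k) q p)"
  proof (intro allI)
    fix k :: "int^'a" and p q :: 'b
    define n :: "nat^'a" where "n = (\<chi> l. nat \<bar>k$l\<bar> + 1)"
    define \<alpha> :: "nat^'a" where "\<alpha> = (\<chi> l. nat (k$l))"
    define \<beta> :: "nat^'a" where "\<beta> = (\<chi> l. nat (- k$l))"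
    have n1: "\<forall>l. 1 \<le> n $ l" by (simp add: n_def)
    have mem: "(\<alpha>, p) \<in> Lambda n \<times> UNIV" "(\<beta>, q) \<in> Lambda n \<times> UNIV"
      by (auto simp: Lambda_def n_def \<alpha>_def \<beta>_def)
    have d1: "idx_diff \<alpha> \<beta> = k" by (simp add: idx_diff_def \<alpha>_def \<beta>_def vec_eq_iff)
    have d2: "idx_diff \<beta> \<alpha> = - k" by (simp add: idx_diff_def \<alpha>_def \<beta>_def vec_eq_iff)
    have "qhermitian (Lambda n \<times> UNIV) (toeplitzQ SL Z W)"
      using H n1 unfolding all_toeplitz_hermitian_def by blast
    then have "toeplitzQ SL Z W (\<alpha>, p) (\<beta>, q) = qcnj (toeplitzQ SL Z W (\<beta>, q) (\<alpha>, p))"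
      using mem unfolding qhermitian_def by blast
    then show "sandwich_coeff SL Z W k p q = qcnj (sandwich_coeff SL Z W (- k) q p)"
      by (simp add: toeplitzQ_def d1 d2)
  qed
next
  assume H: "\<forall>k p q. sandwich_coeff SL Z W k p q = qcnj (sandwich_coeff SL Z W (- k) q p)"
  have d: "idx_diff b a = - idx_diff a b" for a b :: "nat^'a"
    by (simp add: idx_diff_def vec_eq_iff)
  show "all_toeplitz_hermitian SL Z W"
    unfolding all_toeplitz_hermitian_def qhermitian_def toeplitzQ_def
  proof (intro allI impI ballI)
    fix n :: "nat^'a" and x y :: "(nat^'a) \<times> 'b"
    show "sandwich_coeff SL Z W (idx_diff (fst x) (fst y)) (snd x) (snd y) =
          qcnj (sandwich_coeff SL Z W (idx_diff (fst y) (fst x)) (snd y) (snd x))"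
      unfolding d[of "fst y" "fst x"] by (rule H[rule_format])
  qed
qed

lemma AE_pq: "(AE x in M. \<forall>p q. P p q x) \<longleftrightarrow> (\<forall>(p::'a::countable) (q::'b::countable). AE x in M. P p q x)"
  by (simp add: AE_all_countable)

lemma main_iff:
  fixes Z W :: "real^'d \<Rightarrow> complex^'s^'s" and SL :: "'d set"
  assumes Zi: "\<forall>p q. (\<lambda>\<theta>. Z \<theta> $ p $ q) absolutely_integrable_on torus"
      and Wi: "\<forall>p q. (\<lambda>\<theta>. W \<theta> $ p $ q) absolutely_integrable_on torus"
  shows "all_toeplitz_hermitian SL Z W \<longleftrightarrow>
            ((AE \<theta> in lebesgue. \<theta> \<in> torus \<longrightarrow> (\<forall>p q. Z \<theta> $ p $ q = cnj (Z \<theta> $ q $ p))) \<and>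
             (AE \<theta> in lebesgue. \<theta> \<in> torus \<longrightarrow> (\<forall>p q. W (- \<theta>) $ p $ q = - (W \<theta> $ q $ p))))"
proof -
  define DZ where "DZ p q \<theta> = Z \<theta> $ p $ q - cnj (Z \<theta> $ q $ p)" for p q \<theta>
  define DW where "DW p q \<theta> = W \<theta> $ p $ q + W (- \<theta>) $ q $ p" for p q \<theta>
  have DZi: "DZ p q absolutely_integrable_on torus" for p q
    unfolding DZ_def using Zi absint_cnj by (intro set_integral_diff(1)) auto
  have DWi: "DW p q absolutely_integrable_on torus" for p q
    unfolding DW_def using Wi absint_reflect[of "\<lambda>\<theta>. W \<theta> $ q $ p"] by (intro set_integral_add(1)) auto
  let ?c = "cc TYPE('d)"
  have pt: "sandwich_coeff SL Z W k p q = qcnj (sandwich_coeff SL Z W (- k) q p) \<longleftrightarrow>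
        FCt (DZ p q) k = 0 \<and> FCt (DW p q) (sig SL k) = 0" for k p q
  proof -
    have e1: "FCt (DZ p q) k = FCt (\<lambda>\<theta>. Z \<theta> $ p $ q) k - cnj (FCt (\<lambda>\<theta>. Z \<theta> $ q $ p) (- k))"
      unfolding DZ_def FCt_cnj using Zi absint_cnj by (intro FCt_diff) auto
    have e2: "FCt (DW p q) (sig SL k) = FCt (\<lambda>\<theta>. W \<theta> $ p $ q) (sig SL k) + FCt (\<lambda>\<theta>. W \<theta> $ q $ p) (sig SL (- k))"
      unfolding DW_def sig_uminus FCt_reflect using Wi absint_reflect[of "\<lambda>\<theta>. W \<theta> $ q $ p"]
      by (intro FCt_add) auto
    have "sandwich_coeff SL Z W k p q = qcnj (sandwich_coeff SL Z W (- k) q p) \<longleftrightarrow>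
          ?c * FCt (\<lambda>\<theta>. Z \<theta> $ p $ q) k = cnj (?c * FCt (\<lambda>\<theta>. Z \<theta> $ q $ p) (- k)) \<and>
          ?c * FCt (\<lambda>\<theta>. W \<theta> $ p $ q) (sig SL k) = - (?c * FCt (\<lambda>\<theta>. W \<theta> $ q $ p) (sig SL (- k)))"
      by (simp add: sc_eq qcnj_def)
    also have "\<dots> \<longleftrightarrow> FCt (\<lambda>\<theta>. Z \<theta> $ p $ q) k = cnj (FCt (\<lambda>\<theta>. Z \<theta> $ q $ p) (- k)) \<and>
          FCt (\<lambda>\<theta>. W \<theta> $ p $ q) (sig SL k) = - FCt (\<lambda>\<theta>. W \<theta> $ q $ p) (sig SL (- k))"
    proof -
      have c1: "?c \<noteq> 0" by (rule cc_nz)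
      have c2: "cnj ?c = ?c" by (rule cc_cnj)
      have m1: "?c * a = ?c * b \<longleftrightarrow> a = b" for a b using c1 by simp
      have m2: "?c * a = - (?c * b) \<longleftrightarrow> a = - b" for a b
        using m1[of a "- b"] by (simp add: mult_minus_right)
      show ?thesis unfolding complex_cnj_mult c2 m1 m2 ..
    qed
    also have "\<dots> \<longleftrightarrow> FCt (DZ p q) k = 0 \<and> FCt (DW p q) (sig SL k) = 0"
      unfolding e1 e2 by (simp add: eq_neg_iff_add_eq_0)
    finally show ?thesis .
  qed
  have "all_toeplitz_hermitian SL Z W \<longleftrightarrow> (\<forall>k p q. FCt (DZ p q) k = 0 \<and> FCt (DW p q) (sig SL k) = 0)"
    unfolding herm_iff pt ..
  also have "\<dots> \<longleftrightarrow> (\<forall>p q. \<forall>k. FCt (DZ p q) k = 0) \<and> (\<forall>p q. \<forall>m. FCt (DW p q) m = 0)"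
  proof
    assume H: "\<forall>k p q. FCt (DZ p q) k = 0 \<and> FCt (DW p q) (sig SL k) = 0"
    have A: "\<forall>p q. \<forall>k. FCt (DZ p q) k = 0" using H by blast
    have "FCt (DW p q) m = 0" for p q m
    proof -
      have "FCt (DW p q) (sig SL (sig SL m)) = 0" using H by blast
      then show ?thesis by (simp add: sig_sig)
    qed
    then show "(\<forall>p q. \<forall>k. FCt (DZ p q) k = 0) \<and> (\<forall>p q. \<forall>m. FCt (DW p q) m = 0)" using A by blast
  next
    assume H: "(\<forall>p q. \<forall>k. FCt (DZ p q) k = 0) \<and> (\<forall>p q. \<forall>m. FCt (DW p q) m = 0)"
    then show "\<forall>k p q. FCt (DZ p q) k = 0 \<and> FCt (DW p q) (sig SL k) = 0" by blast
  qed
  also have "\<dots> \<longleftrightarrow> (\<forall>p q. AE \<theta> in lebesgue. \<theta> \<in> torus \<longrightarrow> DZ p q \<theta> = 0) \<and>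
                     (\<forall>p q. AE \<theta> in lebesgue. \<theta> \<in> torus \<longrightarrow> DW p q \<theta> = 0)"
  proof -
    have zu: "(\<forall>k. FCt v k = 0) \<longleftrightarrow> (AE \<theta> in lebesgue. \<theta> \<in> torus \<longrightarrow> v \<theta> = 0)"
      if "v absolutely_integrable_on torus" for v :: "real^'d \<Rightarrow> complex"
      using fourier_unique[OF that] fourier_zero_of_ae by blast
    show ?thesis by (simp only: zu[OF DZi] zu[OF DWi])
  qed
  also have "(\<forall>p q. AE \<theta> in lebesgue. \<theta> \<in> torus \<longrightarrow> DZ p q \<theta> = 0) \<longleftrightarrow>
      (AE \<theta> in lebesgue. \<theta> \<in> torus \<longrightarrow> (\<forall>p q. Z \<theta> $ p $ q = cnj (Z \<theta> $ q $ p)))"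
  proof -
    have "(AE \<theta> in lebesgue. \<theta> \<in> torus \<longrightarrow> (\<forall>p q. Z \<theta> $ p $ q = cnj (Z \<theta> $ q $ p)))
        \<longleftrightarrow> (AE \<theta> in lebesgue. \<forall>p q. \<theta> \<in> torus \<longrightarrow> DZ p q \<theta> = 0)"
      by (intro arg_cong[where f="\<lambda>P. eventually P (ae_filter lebesgue)"] ext) (auto simp: DZ_def)
    then show ?thesis using AE_pq[where M=lebesgue and P="\<lambda>p q \<theta>. \<theta> \<in> torus \<longrightarrow> DZ p q \<theta> = 0"] by blast
  qed
  also have "(\<forall>p q. AE \<theta> in lebesgue. \<theta> \<in> torus \<longrightarrow> DW p q \<theta> = 0) \<longleftrightarrow>
      (AE \<theta> in lebesgue. \<theta> \<in> torus \<longrightarrow> (\<forall>p q. W (- \<theta>) $ p $ q = - (W \<theta> $ q $ p)))"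
  proof -
    have "(AE \<theta> in lebesgue. \<theta> \<in> torus \<longrightarrow> (\<forall>p q. W (- \<theta>) $ p $ q = - (W \<theta> $ q $ p)))
        \<longleftrightarrow> (AE \<theta> in lebesgue. \<forall>p q. \<theta> \<in> torus \<longrightarrow> DW q p \<theta> = 0)"
      by (intro arg_cong[where f="\<lambda>P. eventually P (ae_filter lebesgue)"] ext)
         (auto simp: DW_def eq_neg_iff_add_eq_0 add.commute)
    then have "(AE \<theta> in lebesgue. \<theta> \<in> torus \<longrightarrow> (\<forall>p q. W (- \<theta>) $ p $ q = - (W \<theta> $ q $ p)))
        \<longleftrightarrow> (\<forall>p q. AE \<theta> in lebesgue. \<theta> \<in> torus \<longrightarrow> DW q p \<theta> = 0)"
      using AE_pq[where M=lebesgue and P="\<lambda>p q \<theta>. \<theta> \<in> torus \<longrightarrow> DW q p \<theta> = 0"] by blast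
    then show ?thesis by blast
  qed
  finally show ?thesis .
qed

theorem mainTheorem8:
  fixes Z W :: "real^'d \<Rightarrow> complex^'s^'s" and SL :: "'d set"
  assumes "\<forall>p q. (\<lambda>\<theta>. Z \<theta> $ p $ q) absolutely_integrable_on torus"
      and "\<forall>p q. (\<lambda>\<theta>. W \<theta> $ p $ q) absolutely_integrable_on torus"
  shows "(all_toeplitz_hermitian SL Z W \<longleftrightarrow>
            ((AE \<theta> in lebesgue. \<theta> \<in> torus \<longrightarrow> (\<forall>p q. Z \<theta> $ p $ q = cnj (Z \<theta> $ q $ p))) \<and>
             (AE \<theta> in lebesgue. \<theta> \<in> torus \<longrightarrow> (\<forall>p q. W (- \<theta>) $ p $ q = - (W \<theta> $ q $ p)))))
         \<and> (\<forall>SL'. all_toeplitz_hermitian SL Z W \<longleftrightarrow> all_toeplitz_hermitian SL' Z W)"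
  using main_iff[OF assms] by blast


end
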